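(* The nine vectors $C_{b_0,b_0},C_{b_0,b_1},C_{b_0,b_2},C_{b_1,b_2},C_{b_2,b_2},C_{zb_2,b_1},C_{z^2b_2,b_0},C_{zb_1,b_0},C_{zb_1,b_1}$ are linearly independent over $\mathbb Q(q)$, and $N=\sum \mathbb Q(q)[z\otimes z,z^{-1}\otimes z^{-1},z\otimes1+1\otimes z]\,C$, the sum running over these nine vectors $C$. Moreover $N$ does not change if $v_0\otimes v_0$ is replaced by $v_2\otimes v_2$ in its definition, and $z^av_j\otimes z^av_j\in N$ for all $a\in\mathbb Z$ and $j\in\{0,2\}$.
   Context: Let $\mathfrak g=\widehat{\mathfrak{sl}}_2$, $I=\{0,1\}$, weight lattice $P=\mathbb Z\Lambda_0\oplus\mathbb Z\Lambda_1\oplus\mathbb Z\delta$, coroots $h_0,h_1$ with $\langle h_i,\Lambda_j\rangle=\delta_{ij}$, $\langle h_i,\delta\rangle=0$, central element $c=h_0+h_1$. $U_q(\mathfrak g)$ is the quantum affine algebra over $\mathbb Q(q)$ with generators $e_i,f_i$ ($i\in I$), $q^h$ ($h\in P^*$), $t_i=q^{h_i}$, and coproduct $\Delta(q^h)=q^h\otimes q^h$, $\Delta(e_i)=e_i\otimes1+t_i^{-1}\otimes e_i$, $\Delta(f_i)=f_i\otimes t_i+1\otimes f_i$. $[n]=(q^n-q^{-n})/(q-q^{-1})$. Let $J=\{0,1,2\}$. $V_{\mathrm{aff}}$ is the $\mathbb Q(q)$-space with basis $z^av_j$ ($a\in\mathbb Z$, $j\in J$), a $U_q(\mathfrak g)$-module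 via: $\mathrm{wt}(z^av_j)=2(1-j)(\Lambda_1-\Lambda_0)+a\delta$, $q^hz^av_j=q^{\langle h,\mathrm{wt}(z^av_j)\rangle}z^av_j$, $e_1z^av_j=[3-j]z^av_{j-1}$, $f_1z^av_j=[j+1]z^av_{j+1}$, $e_0z^av_j=[j+1]z^{a+1}v_{j+1}$, $f_0z^av_j=[3-j]z^{a-1}v_{j-1}$ (with $v_{-1}=v_3=0$). The operator $z^b$ sends $z^av_j\mapsto z^{a+b}v_j$. $N\subset V_{\mathrm{aff}}\otimes V_{\mathrm{aff}}$ is the smallest subspace containing $v_0\otimes v_0$ that is stable under the action of $U_q(\mathfrak g)$ (via $\Delta$) and under the operators $z\otimes z$, $z^{-1}\otimes z^{-1}$, $z\otimes1+1\otimes z$. The nine vectors are: $C_{b_0,b_0}=v_0\otimes v_0$, $C_{b_0,b_1}=v_0\otimes v_1+q^2v_1\otimes v_0$, $C_{b_0,b_2}=v_0\otimes v_2+q\,v_1\otimes v_1+q^4v_2\otimes v_0$, $C_{b_1,b_2}=v_1\otimes v_2+q^2v_2\otimes v_1$, $C_{b_2,b_2}=v_2\otimes v_2$, $C_{zb_2,b_1}=zv_2\otimes v_1+q^2v_1\otimes zv_2$, $C_{z^2b_2,b_0}=z^2v_2\otimes v_0+q\,zv_1\otimes zv_1+q^4v_0\otimes z^2v_2$, $C_{zb_1,b_0}=zv_1\otimes v_0+q^2v_0\otimes zv_1$, $C_{zb_1,b_1}=zv_1\otimes v_1+q^2v_1\otimes zv_1+q^2[2](v_0\otimes zv_2+zv_2\otimes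 v_0)$. *)

theory Defs
  imports "HOL-Computational_Algebra.Polynomial" "HOL-Computational_Algebra.Fraction_Field"
begin

section \<open>The base field Q(q)\<close>

type_synonym F = "rat poly fract"

definition qq :: F where "qq = Fract [:0, 1:] 1"

definition qint :: "int \<Rightarrow> F" where
  "qint n = (qq powi n - qq powi (-n)) / (qq - qq powi (-1))"

text \<open>A vector of V_aff is given by its coefficients w.r.t. the basis z^a v_j,
  indexed by (a, j); only j in J = {0,1,2} is meaningful. A vector of V_aff (x) V_aff
  is given by its coefficients w.r.t. the basis (z^a v_j) (x) (z^b v_k), indexed by (a,j,b,k).\<close>

type_synonym vec = "int \<times> int \<Rightarrow> F"
type_synonym tens = "int \<times> int \<times> int \<times> int \<Rightarrow> F"

definition Jset :: "int set" where "Jset = {0, 1, 2}"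

definition tadd :: "tens \<Rightarrow> tens \<Rightarrow> tens" where
  "tadd f g = (\<lambda>x. f x + g x)"

definition tsmult :: "F \<Rightarrow> tens \<Rightarrow> tens" where
  "tsmult c f = (\<lambda>x. c * f x)"

definition bt :: "int \<Rightarrow> int \<Rightarrow> int \<Rightarrow> int \<Rightarrow> tens" where
  "bt a j b k = (\<lambda>x. if x = (a, j, b, k) then 1 else 0)"

text \<open>e_1 z^a v_j = [3-j] z^a v_(j-1), with v_(-1) = 0.\<close>
definition opE1 :: "vec \<Rightarrow> vec" where
  "opE1 v = (\<lambda>(a, j). if j \<in> {0, 1} then qint (3 - (j + 1)) * v (a, j + 1) else 0)"

text \<open>f_1 z^a v_j = [j+1] z^a v_(j+1), with v_3 = 0.\<close>
definition opF1 :: "vec \<Rightarrow> vec" where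
  "opF1 v = (\<lambda>(a, j). if j \<in> {1, 2} then qint ((j - 1) + 1) * v (a, j - 1) else 0)"

text \<open>e_0 z^a v_j = [j+1] z^(a+1) v_(j+1), with v_3 = 0.\<close>
definition opE0 :: "vec \<Rightarrow> vec" where
  "opE0 v = (\<lambda>(a, j). if j \<in> {1, 2} then qint ((j - 1) + 1) * v (a - 1, j - 1) else 0)"

text \<open>f_0 z^a v_j = [3-j] z^(a-1) v_(j-1), with v_(-1) = 0.\<close>
definition opF0 :: "vec \<Rightarrow> vec" where
  "opF0 v = (\<lambda>(a, j). if j \<in> {0, 1} then qint (3 - (j + 1)) * v (a + 1, j + 1) else 0)"

text \<open>An element h of P^* = Hom(P, Z) is given by its values (c0, c1, d) on
  Lambda_0, Lambda_1, delta. The pairing of h with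
  wt(z^a v_j) = 2(1-j)(Lambda_1 - Lambda_0) + a delta.\<close>
definition pairing :: "int \<times> int \<times> int \<Rightarrow> int \<Rightarrow> int \<Rightarrow> int" where
  "pairing h a j = (case h of (c0, c1, d) \<Rightarrow> c0 * (- 2 * (1 - j)) + c1 * (2 * (1 - j)) + d * a)"

definition opQ :: "int \<times> int \<times> int \<Rightarrow> vec \<Rightarrow> vec" where
  "opQ h v = (\<lambda>(a, j). qq powi (pairing h a j) * v (a, j))"

text \<open>Coroots: h_0 = (1,0,0), h_1 = (0,1,0); t_i = q^(h_i).\<close>
definition coroot :: "nat \<Rightarrow> int \<times> int \<times> int" where
  "coroot i = (if i = 0 then (1, 0, 0) else (0, 1, 0))"

definition neg_h :: "int \<times> int \<times> int \<Rightarrow> int \<times> int \<times> int" where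
  "neg_h h = (case h of (c0, c1, d) \<Rightarrow> (- c0, - c1, - d))"

definition opE :: "nat \<Rightarrow> vec \<Rightarrow> vec" where
  "opE i = (if i = 0 then opE0 else opE1)"

definition opF :: "nat \<Rightarrow> vec \<Rightarrow> vec" where
  "opF i = (if i = 0 then opF0 else opF1)"

text \<open>The operator z^b: z^a v_j \<mapsto> z^(a+b) v_j.\<close>
definition opZ :: "int \<Rightarrow> vec \<Rightarrow> vec" where
  "opZ b v = (\<lambda>(a, j). v (a - b, j))"

definition lift1 :: "(vec \<Rightarrow> vec) \<Rightarrow> tens \<Rightarrow> tens" where
  "lift1 A f = (\<lambda>(a, j, b, k). A (\<lambda>(a', j'). f (a', j', b, k)) (a, j))"

definition lift2 :: "(vec \<Rightarrow> vec) \<Rightarrow> tens \<Rightarrow> tens" where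
  "lift2 A f = (\<lambda>(a, j, b, k). A (\<lambda>(b', k'). f (a, j, b', k')) (b, k))"

text \<open>Coproduct: Delta(q^h) = q^h (x) q^h, Delta(e_i) = e_i (x) 1 + t_i^-1 (x) e_i,
  Delta(f_i) = f_i (x) t_i + 1 (x) f_i.\<close>
definition DQ :: "int \<times> int \<times> int \<Rightarrow> tens \<Rightarrow> tens" where
  "DQ h f = lift1 (opQ h) (lift2 (opQ h) f)"

definition DE :: "nat \<Rightarrow> tens \<Rightarrow> tens" where
  "DE i f = tadd (lift1 (opE i) f) (lift1 (opQ (neg_h (coroot i))) (lift2 (opE i) f))"

definition DF :: "nat \<Rightarrow> tens \<Rightarrow> tens" where
  "DF i f = tadd (lift1 (opF i) (lift2 (opQ (coroot i)) f)) (lift2 (opF i) f)"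

definition ZZ :: "tens \<Rightarrow> tens" where "ZZ f = lift1 (opZ 1) (lift2 (opZ 1) f)"
definition ZZi :: "tens \<Rightarrow> tens" where "ZZi f = lift1 (opZ (-1)) (lift2 (opZ (-1)) f)"
definition ZS :: "tens \<Rightarrow> tens" where "ZS f = tadd (lift1 (opZ 1) f) (lift2 (opZ 1) f)"

inductive_set Ngen :: "tens \<Rightarrow> tens set" for g :: tens where
  gen: "g \<in> Ngen g"
| zero: "(\<lambda>x. 0) \<in> Ngen g"
| add: "f \<in> Ngen g \<Longrightarrow> h \<in> Ngen g \<Longrightarrow> tadd f h \<in> Ngen g"
| smult: "f \<in> Ngen g \<Longrightarrow> tsmult c f \<in> Ngen g"
| e: "f \<in> Ngen g \<Longrightarrow> i \<in> {0, 1} \<Longrightarrow> DE i f \<in> Ngen g"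
| f: "f \<in> Ngen g \<Longrightarrow> i \<in> {0, 1} \<Longrightarrow> DF i f \<in> Ngen g"
| qh: "f \<in> Ngen g \<Longrightarrow> DQ h f \<in> Ngen g"
| zz: "f \<in> Ngen g \<Longrightarrow> ZZ f \<in> Ngen g"
| zzi: "f \<in> Ngen g \<Longrightarrow> ZZi f \<in> Ngen g"
| zs: "f \<in> Ngen g \<Longrightarrow> ZS f \<in> Ngen g"

definition N :: "tens set" where "N = Ngen (bt 0 0 0 0)"

definition C_list :: "tens list" where
  "C_list = [
     bt 0 0 0 0,
     tadd (bt 0 0 0 1) (tsmult (qq^2) (bt 0 1 0 0)),
     tadd (bt 0 0 0 2) (tadd (tsmult qq (bt 0 1 0 1)) (tsmult (qq^4) (bt 0 2 0 0))),
     tadd (bt 0 1 0 2) (tsmult (qq^2) (bt 0 2 0 1)),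
     bt 0 2 0 2,
     tadd (bt 1 2 0 1) (tsmult (qq^2) (bt 0 1 1 2)),
     tadd (bt 2 2 0 0) (tadd (tsmult qq (bt 1 1 1 1)) (tsmult (qq^4) (bt 0 0 2 2))),
     tadd (bt 1 1 0 0) (tsmult (qq^2) (bt 0 0 1 1)),
     tadd (bt 1 1 0 1) (tadd (tsmult (qq^2) (bt 0 1 1 1))
        (tsmult (qq^2 * qint 2) (tadd (bt 0 0 1 2) (bt 1 2 0 0))))]"

definition lin_indep :: "tens list \<Rightarrow> bool" where
  "lin_indep Cs \<longleftrightarrow> (\<forall>c :: nat \<Rightarrow> F.
     (\<lambda>x. \<Sum>i<length Cs. c i * (Cs ! i) x) = (\<lambda>x. 0) \<longrightarrow> (\<forall>i<length Cs. c i = 0))"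

text \<open>The sum over C in Cs of Q(q)[z(x)z, z^-1(x)z^-1, z(x)1+1(x)z] C: finite
  Q(q)-linear combinations of monomials Z^m Zi^n S^p applied to the C's.\<close>
definition poly_span :: "tens list \<Rightarrow> tens set" where
  "poly_span Cs = {v. \<exists>(c :: nat \<Rightarrow> nat \<times> nat \<times> nat \<Rightarrow> F) (D :: (nat \<times> nat \<times> nat) set).
     finite D \<and>
     v = (\<lambda>x. \<Sum>i<length Cs. \<Sum>(m, n, p)\<in>D.
            c i (m, n, p) * ((ZZ ^^ m) ((ZZi ^^ n) ((ZS ^^ p) (Cs ! i)))) x)}"

end

theory Submission
  imports Defs
begin

lemma qq_gt1: "qq > 1"
proof -
  have "(1::rat poly) < [:0,1:]"
    by (simp add: less_poly_def one_pCons pos_poly_pCons)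
  then show ?thesis unfolding qq_def using one_less_Fract_iff[of 1 "[:0,1:]"] by (metis zero_less_one)
qed

lemma qq_pos: "qq > 0" using qq_gt1 by simp
lemma qq_nz[simp]: "qq \<noteq> 0" using qq_gt1 by simp
lemma qq_sq_gt1: "qq*qq > 1" using qq_gt1 less_1_mult by blast

lemma qint1[simp]: "qint 1 = 1"
  unfolding qint_def using qq_sq_gt1 by (simp add: power_int_minus field_simps)
lemma qint2: "qint 2 = (qq^2+1)/qq"
proof -
  have "qq*qq - 1 \<noteq> 0" using qq_sq_gt1 by simp
  then show ?thesis unfolding qint_def by (simp add: power_int_minus field_simps power2_eq_square)
qed
lemma qint3: "qint 3 = (qq^4+qq^2+1)/qq^2"
proof -
  have "qq*qq - 1 \<noteq> 0" using qq_sq_gt1 by simp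
  then show ?thesis unfolding qint_def apply (simp add: power_int_minus field_simps power2_eq_square) by algebra
qed
lemma qint4: "qint 4 = (qq^6+qq^4+qq^2+1)/qq^3"
proof -
  have "qq*qq - 1 \<noteq> 0" using qq_sq_gt1 by simp
  then show ?thesis unfolding qint_def apply (simp add: power_int_minus field_simps power2_eq_square) by algebra
qed
lemma qint2_nz: "qint 2 \<noteq> 0"
proof -
  have "0 < qq^2+1" using qq_pos by (intro add_pos_pos zero_less_power) auto
  then show ?thesis by (simp add: qint2)
qed
lemma qint3_nz: "qint 3 \<noteq> 0"
proof -
  have "0 < qq^4+qq^2+1" using qq_pos by (intro add_pos_pos zero_less_power) auto
  then show ?thesis by (simp add: qint3)
qed
lemma qint4_nz: "qint 4 \<noteq> 0"
proof -
  have "0 < qq^6+qq^4+qq^2+1" using qq_pos by (intro add_pos_pos zero_less_power) auto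
  then show ?thesis by (simp add: qint4)
qed

lemma ZZ_pt: "ZZ f = (\<lambda>(a,j,b,k). f (a-1,j,b-1,k))"
  unfolding ZZ_def lift1_def lift2_def opZ_def by (auto simp: fun_eq_iff)
lemma ZZi_pt: "ZZi f = (\<lambda>(a,j,b,k). f (a+1,j,b+1,k))"
  unfolding ZZi_def lift1_def lift2_def opZ_def by (auto simp: fun_eq_iff)
lemma ZS_pt: "ZS f = (\<lambda>(a,j,b,k). f (a-1,j,b,k) + f (a,j,b-1,k))"
  unfolding ZS_def tadd_def lift1_def lift2_def opZ_def by (auto simp: fun_eq_iff)

lemma ZZ_ZZi: "ZZ (ZZi f) = f" by (simp add: ZZ_pt ZZi_pt fun_eq_iff)
lemma ZZi_ZZ: "ZZi (ZZ f) = f" by (simp add: ZZ_pt ZZi_pt fun_eq_iff)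
lemma ZZ_ZS: "ZZ (ZS f) = ZS (ZZ f)" by (simp add: ZZ_pt ZS_pt fun_eq_iff)
lemma ZZi_ZS: "ZZi (ZS f) = ZS (ZZi f)" by (simp add: ZZi_pt ZS_pt fun_eq_iff)

lemma DE_ZZ: "DE i (ZZ f) = ZZ (DE i f)"
  unfolding ZZ_pt DE_def tadd_def lift1_def lift2_def opE_def opE0_def opE1_def opQ_def
    pairing_def neg_h_def coroot_def
  by (auto simp: fun_eq_iff algebra_simps)
lemma DE_ZZi: "DE i (ZZi f) = ZZi (DE i f)"
  unfolding ZZi_pt DE_def tadd_def lift1_def lift2_def opE_def opE0_def opE1_def opQ_def
    pairing_def neg_h_def coroot_def
  by (auto simp: fun_eq_iff algebra_simps)
lemma DE_ZS: "DE i (ZS f) = ZS (DE i f)"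
  unfolding ZS_pt DE_def tadd_def lift1_def lift2_def opE_def opE0_def opE1_def opQ_def
    pairing_def neg_h_def coroot_def
  by (auto simp: fun_eq_iff algebra_simps)
lemma DF_ZZ: "DF i (ZZ f) = ZZ (DF i f)"
  unfolding ZZ_pt DF_def tadd_def lift1_def lift2_def opF_def opF0_def opF1_def opQ_def
    pairing_def neg_h_def coroot_def
  by (auto simp: fun_eq_iff algebra_simps)
lemma DF_ZZi: "DF i (ZZi f) = ZZi (DF i f)"
  unfolding ZZi_pt DF_def tadd_def lift1_def lift2_def opF_def opF0_def opF1_def opQ_def
    pairing_def neg_h_def coroot_def
  by (auto simp: fun_eq_iff algebra_simps)
lemma DF_ZS: "DF i (ZS f) = ZS (DF i f)"
  unfolding ZS_pt DF_def tadd_def lift1_def lift2_def opF_def opF0_def opF1_def opQ_def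
    pairing_def neg_h_def coroot_def
  by (auto simp: fun_eq_iff algebra_simps)

definition lin1 :: "(vec \<Rightarrow> vec) \<Rightarrow> bool" where
  "lin1 A \<longleftrightarrow> (\<forall>u v. A (\<lambda>y. u y + v y) = (\<lambda>y. A u y + A v y)) \<and> (\<forall>c u. A (\<lambda>y. c * u y) = (\<lambda>y. c * A u y))"

definition linop :: "(tens \<Rightarrow> tens) \<Rightarrow> bool" where
  "linop T \<longleftrightarrow> (\<forall>f g. T (tadd f g) = tadd (T f) (T g)) \<and> (\<forall>c f. T (tsmult c f) = tsmult c (T f))"

lemma lin1_E1: "lin1 opE1" unfolding lin1_def opE1_def by (auto simp: fun_eq_iff algebra_simps)
lemma lin1_E0: "lin1 opE0" unfolding lin1_def opE0_def by (auto simp: fun_eq_iff algebra_simps)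
lemma lin1_F1: "lin1 opF1" unfolding lin1_def opF1_def by (auto simp: fun_eq_iff algebra_simps)
lemma lin1_F0: "lin1 opF0" unfolding lin1_def opF0_def by (auto simp: fun_eq_iff algebra_simps)
lemma lin1_Q: "lin1 (opQ h)" unfolding lin1_def opQ_def by (auto simp: fun_eq_iff algebra_simps)
lemma lin1_Z: "lin1 (opZ h)" unfolding lin1_def opZ_def by (auto simp: fun_eq_iff algebra_simps)
lemma lin1_E: "lin1 (opE i)" unfolding opE_def using lin1_E0 lin1_E1 by simp
lemma lin1_F: "lin1 (opF i)" unfolding opF_def using lin1_F0 lin1_F1 by simp

lemma linop_lift1: assumes "lin1 A" shows "linop (lift1 A)"
  unfolding linop_def
proof (intro conjI allI)
  have lA: "\<And>u v. A (\<lambda>y. u y + v y) = (\<lambda>y. A u y + A v y)" and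
       lB: "\<And>c u. A (\<lambda>y. c * u y) = (\<lambda>y. c * A u y)" using assms unfolding lin1_def by blast+
  fix f g
  show "lift1 A (tadd f g) = tadd (lift1 A f) (lift1 A g)"
  proof (rule ext, clarify)
    fix a j b k
    have e: "(\<lambda>(a', j'). tadd f g (a', j', b, k)) = (\<lambda>y. (\<lambda>(a', j'). f (a', j', b, k)) y + (\<lambda>(a', j'). g (a', j', b, k)) y)"
      by (auto simp: tadd_def)
    have "lift1 A (tadd f g) (a, j, b, k) = A (\<lambda>(a', j'). tadd f g (a', j', b, k)) (a,j)"
      unfolding lift1_def by simp
    also have "\<dots> = A (\<lambda>(a', j'). f (a', j', b, k)) (a,j) + A (\<lambda>(a', j'). g (a', j', b, k)) (a,j)"
      unfolding e lA by (rule refl)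
    also have "\<dots> = tadd (lift1 A f) (lift1 A g) (a, j, b, k)"
      unfolding lift1_def tadd_def by simp
    finally show "lift1 A (tadd f g) (a, j, b, k) = tadd (lift1 A f) (lift1 A g) (a, j, b, k)" .
  qed
next
  have lB: "\<And>c u. A (\<lambda>y. c * u y) = (\<lambda>y. c * A u y)" using assms unfolding lin1_def by blast+
  fix c f
  show "lift1 A (tsmult c f) = tsmult c (lift1 A f)"
  proof (rule ext, clarify)
    fix a j b k
    have e: "(\<lambda>(a', j'). tsmult c f (a', j', b, k)) = (\<lambda>y. c * (\<lambda>(a', j'). f (a', j', b, k)) y)"
      by (auto simp: tsmult_def)
    have "lift1 A (tsmult c f) (a, j, b, k) = A (\<lambda>(a', j'). tsmult c f (a', j', b, k)) (a,j)"
      unfolding lift1_def by simp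
    also have "\<dots> = c * A (\<lambda>(a', j'). f (a', j', b, k)) (a,j)"
      unfolding e lB by (rule refl)
    also have "\<dots> = tsmult c (lift1 A f) (a, j, b, k)"
      unfolding lift1_def tsmult_def by simp
    finally show "lift1 A (tsmult c f) (a, j, b, k) = tsmult c (lift1 A f) (a, j, b, k)" .
  qed
qed
lemma linop_lift2: assumes "lin1 A" shows "linop (lift2 A)"
  unfolding linop_def
proof (intro conjI allI)
  have lA: "\<And>u v. A (\<lambda>y. u y + v y) = (\<lambda>y. A u y + A v y)" and
       lB: "\<And>c u. A (\<lambda>y. c * u y) = (\<lambda>y. c * A u y)" using assms unfolding lin1_def by blast+
  fix f g
  show "lift2 A (tadd f g) = tadd (lift2 A f) (lift2 A g)"
  proof (rule ext, clarify)
    fix a j b k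
    have e: "(\<lambda>(b', k'). tadd f g (a, j, b', k')) = (\<lambda>y. (\<lambda>(b', k'). f (a, j, b', k')) y + (\<lambda>(b', k'). g (a, j, b', k')) y)"
      by (auto simp: tadd_def)
    have "lift2 A (tadd f g) (a, j, b, k) = A (\<lambda>(b', k'). tadd f g (a, j, b', k')) (b,k)"
      unfolding lift2_def by simp
    also have "\<dots> = A (\<lambda>(b', k'). f (a, j, b', k')) (b,k) + A (\<lambda>(b', k'). g (a, j, b', k')) (b,k)"
      unfolding e lA by (rule refl)
    also have "\<dots> = tadd (lift2 A f) (lift2 A g) (a, j, b, k)"
      unfolding lift2_def tadd_def by simp
    finally show "lift2 A (tadd f g) (a, j, b, k) = tadd (lift2 A f) (lift2 A g) (a, j, b, k)" .
  qed
next
  have lB: "\<And>c u. A (\<lambda>y. c * u y) = (\<lambda>y. c * A u y)" using assms unfolding lin1_def by blast+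
  fix c f
  show "lift2 A (tsmult c f) = tsmult c (lift2 A f)"
  proof (rule ext, clarify)
    fix a j b k
    have e: "(\<lambda>(b', k'). tsmult c f (a, j, b', k')) = (\<lambda>y. c * (\<lambda>(b', k'). f (a, j, b', k')) y)"
      by (auto simp: tsmult_def)
    have "lift2 A (tsmult c f) (a, j, b, k) = A (\<lambda>(b', k'). tsmult c f (a, j, b', k')) (b,k)"
      unfolding lift2_def by simp
    also have "\<dots> = c * A (\<lambda>(b', k'). f (a, j, b', k')) (b,k)"
      unfolding e lB by (rule refl)
    also have "\<dots> = tsmult c (lift2 A f) (a, j, b, k)"
      unfolding lift2_def tsmult_def by simp
    finally show "lift2 A (tsmult c f) (a, j, b, k) = tsmult c (lift2 A f) (a, j, b, k)" .
  qed
qed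

lemma linop_comp: "linop T \<Longrightarrow> linop S \<Longrightarrow> linop (\<lambda>f. T (S f))"
  unfolding linop_def by simp
lemma linop_sum: assumes "linop T" "linop S" shows "linop (\<lambda>f. tadd (T f) (S f))"
proof -
  have T1: "\<And>f g. T (tadd f g) = tadd (T f) (T g)" and T2: "\<And>c f. T (tsmult c f) = tsmult c (T f)"
    using assms(1) unfolding linop_def by blast+
  have S1: "\<And>f g. S (tadd f g) = tadd (S f) (S g)" and S2: "\<And>c f. S (tsmult c f) = tsmult c (S f)"
    using assms(2) unfolding linop_def by blast+
  show ?thesis unfolding linop_def T1 T2 S1 S2
    by (simp add: tadd_def tsmult_def fun_eq_iff algebra_simps)
qed

lemma linop_zero: "linop T \<Longrightarrow> T (\<lambda>x. 0) = (\<lambda>x. 0)"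
proof -
  assume "linop T"
  then have "T (tsmult 0 (\<lambda>x. 0)) = tsmult 0 (T (\<lambda>x. 0))" unfolding linop_def by blast
  then show ?thesis by (simp add: tsmult_def)
qed

lemma linop_DE: "linop (DE i)"
  unfolding DE_def[abs_def]
  by (rule linop_sum[OF linop_lift1[OF lin1_E] linop_comp[OF linop_lift1[OF lin1_Q] linop_lift2[OF lin1_E]]])
lemma linop_DF: "linop (DF i)"
  unfolding DF_def[abs_def]
  by (rule linop_sum[OF linop_comp[OF linop_lift1[OF lin1_F] linop_lift2[OF lin1_Q]] linop_lift2[OF lin1_F]])
lemma linop_DQ: "linop (DQ h)"
  unfolding DQ_def[abs_def]
  by (rule linop_comp[OF linop_lift1[OF lin1_Q] linop_lift2[OF lin1_Q]])
lemma linop_ZZ: "linop ZZ"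
  unfolding ZZ_def[abs_def]
  by (rule linop_comp[OF linop_lift1[OF lin1_Z] linop_lift2[OF lin1_Z]])
lemma linop_ZZi: "linop ZZi"
  unfolding ZZi_def[abs_def]
  by (rule linop_comp[OF linop_lift1[OF lin1_Z] linop_lift2[OF lin1_Z]])
lemma linop_ZS: "linop ZS"
  unfolding ZS_def[abs_def]
  by (rule linop_sum[OF linop_lift1[OF lin1_Z] linop_lift2[OF lin1_Z]])

definition homog :: "int \<Rightarrow> int \<Rightarrow> tens \<Rightarrow> bool" where
  "homog s t f \<longleftrightarrow> (\<forall>a j b k. f (a,j,b,k) \<noteq> 0 \<longrightarrow> j + k = s \<and> a + b = t)"

definition wq :: "int \<times> int \<times> int \<Rightarrow> int \<Rightarrow> int \<Rightarrow> int" where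
  "wq h s t = (case h of (c0, c1, d) \<Rightarrow> c0 * (-2) * (2 - s) + c1 * 2 * (2 - s) + d * t)"

lemma DQ_homog: assumes "homog s t f" shows "DQ h f = tsmult (qq powi (wq h s t)) f"
proof (rule ext, clarify)
  fix a j b k
  obtain c0 c1 d where h: "h = (c0,c1,d)" by (cases h) auto
  show "DQ h f (a,j,b,k) = tsmult (qq powi (wq h s t)) f (a,j,b,k)"
  proof (cases "f (a,j,b,k) = 0")
    case True then show ?thesis by (simp add: DQ_def lift1_def lift2_def opQ_def tsmult_def)
  next
    case False
    then have st: "s = j + k" "t = a + b" using assms unfolding homog_def by auto
    have e: "wq h s t = pairing h a j + pairing h b k"
      unfolding wq_def pairing_def h st by (simp add: algebra_simps)
    show ?thesis unfolding e
      by (simp add: DQ_def lift1_def lift2_def opQ_def tsmult_def power_int_add)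
  qed
qed

lemma homog_ZZ: "homog s t f \<Longrightarrow> homog s (t+2) (ZZ f)"
  unfolding homog_def ZZ_pt by fastforce
lemma homog_ZZi: "homog s t f \<Longrightarrow> homog s (t-2) (ZZi f)"
  unfolding homog_def ZZi_pt by fastforce
lemma homog_ZS: assumes "homog s t f" shows "homog s (t+1) (ZS f)"
  unfolding homog_def
proof (intro allI impI)
  fix a j b k assume "ZS f (a,j,b,k) \<noteq> 0"
  then have "f (a-1,j,b,k) \<noteq> 0 \<or> f (a,j,b-1,k) \<noteq> 0" by (auto simp: ZS_pt)
  then show "j + k = s \<and> a + b = t + 1" using assms unfolding homog_def by force
qed

type_synonym key = "int \<times> int \<times> int \<times> int"

definition ev :: "(F \<times> key) list \<Rightarrow> tens" where
  "ev L = (\<lambda>x. sum_list (map (\<lambda>(c,t). if t = x then c else 0) L))"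
definition ev1 :: "(F \<times> int \<times> int) list \<Rightarrow> vec" where
  "ev1 L = (\<lambda>x. sum_list (map (\<lambda>(c,t). if t = x then c else 0) L))"

definition lmap1 :: "(int \<Rightarrow> int \<Rightarrow> (F \<times> int \<times> int) list) \<Rightarrow> (F \<times> key) list \<Rightarrow> (F \<times> key) list" where
  "lmap1 LA L = concat (map (\<lambda>(c,(a,j,b,k)). map (\<lambda>(d,(a',j')). (c*d,(a',j',b,k))) (LA a j)) L)"
definition lmap2 :: "(int \<Rightarrow> int \<Rightarrow> (F \<times> int \<times> int) list) \<Rightarrow> (F \<times> key) list \<Rightarrow> (F \<times> key) list" where
  "lmap2 LA L = concat (map (\<lambda>(c,(a,j,b,k)). map (\<lambda>(d,(b',k')). (c*d,(a,j,b',k'))) (LA b k)) L)"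

definition rep :: "(vec \<Rightarrow> vec) \<Rightarrow> (int \<Rightarrow> int \<Rightarrow> (F \<times> int \<times> int) list) \<Rightarrow> bool" where
  "rep A LA \<longleftrightarrow> (\<forall>a j. A (\<lambda>y. if (a,j) = y then 1 else 0) = ev1 (LA a j))"

lemma ev_Nil: "ev [] = (\<lambda>x. 0)" by (simp add: ev_def)
lemma ev_Cons_pt: "ev ((c,t)#L) x = (if t = x then c else 0) + ev L x" by (simp add: ev_def)
lemma ev_append: "ev (xs @ ys) = tadd (ev xs) (ev ys)" by (simp add: ev_def tadd_def fun_eq_iff)
lemma ev1_Cons_pt: "ev1 ((c,t)#L) x = (if t = x then c else 0) + ev1 L x" by (simp add: ev1_def)
lemma ev1_Nil: "ev1 [] x = 0" by (simp add: ev1_def)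

lemma ev_map1_pt: "ev (map (\<lambda>(d,(a',j')). (c*d,(a',j',b0,k0))) xs) (a,j,b,k) = (if (b0,k0) = (b,k) then c * ev1 xs (a,j) else 0)"
  by (induction xs) (auto simp: ev_def ev1_def algebra_simps)
lemma ev_map2_pt: "ev (map (\<lambda>(d,(b',k')). (c*d,(a0,j0,b',k'))) xs) (a,j,b,k) = (if (a0,j0) = (a,j) then c * ev1 xs (b,k) else 0)"
  by (induction xs) (auto simp: ev_def ev1_def algebra_simps)

lemma lift1_ev: assumes lin: "lin1 A" and r: "rep A LA" shows "lift1 A (ev L) = ev (lmap1 LA L)"
proof (induction L)
  case Nil
  have "lift1 A (\<lambda>x. 0) = (\<lambda>x. 0)" by (rule linop_zero[OF linop_lift1[OF lin]])
  then show ?case by (simp add: ev_Nil lmap1_def)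
next
  case (Cons p L)
  obtain c a0 j0 b0 k0 where p: "p = (c,(a0,j0,b0,k0))" by (cases p) auto
  have lA: "\<And>u v. A (\<lambda>y. u y + v y) = (\<lambda>y. A u y + A v y)" and
       lB: "\<And>c u. A (\<lambda>y. c * u y) = (\<lambda>y. c * A u y)" using lin unfolding lin1_def by blast+
  show ?case
  proof (rule ext, clarify)
    fix a j b k
    have e: "(\<lambda>(a',j'). ev (p#L) (a',j',b,k)) = (\<lambda>y. (\<lambda>y. (if (b0,k0) = (b,k) then c else 0) * (if (a0,j0) = y then 1 else 0)) y + (\<lambda>(a',j'). ev L (a',j',b,k)) y)"
      by (auto simp: p ev_Cons_pt)
    have "lift1 A (ev (p#L)) (a,j,b,k) = A (\<lambda>(a',j'). ev (p#L) (a',j',b,k)) (a,j)"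
      unfolding lift1_def by simp
    also have "\<dots> = (if (b0,k0) = (b,k) then c else 0) * ev1 (LA a0 j0) (a,j) + lift1 A (ev L) (a,j,b,k)"
      unfolding e lA lB using r unfolding rep_def lift1_def by simp
    also have "\<dots> = ev (lmap1 LA (p#L)) (a,j,b,k)"
      unfolding Cons.IH by (simp add: p lmap1_def ev_append tadd_def ev_map1_pt)
    finally show "lift1 A (ev (p # L)) (a, j, b, k) = ev (lmap1 LA (p # L)) (a, j, b, k)" .
  qed
qed

lemma lift2_ev: assumes lin: "lin1 A" and r: "rep A LA" shows "lift2 A (ev L) = ev (lmap2 LA L)"
proof (induction L)
  case Nil
  have "lift2 A (\<lambda>x. 0) = (\<lambda>x. 0)" by (rule linop_zero[OF linop_lift2[OF lin]])
  then show ?case by (simp add: ev_Nil lmap2_def)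
next
  case (Cons p L)
  obtain c a0 j0 b0 k0 where p: "p = (c,(a0,j0,b0,k0))" by (cases p) auto
  have lA: "\<And>u v. A (\<lambda>y. u y + v y) = (\<lambda>y. A u y + A v y)" and
       lB: "\<And>c u. A (\<lambda>y. c * u y) = (\<lambda>y. c * A u y)" using lin unfolding lin1_def by blast+
  show ?case
  proof (rule ext, clarify)
    fix a j b k
    have e: "(\<lambda>(b',k'). ev (p#L) (a,j,b',k')) = (\<lambda>y. (\<lambda>y. (if (a0,j0) = (a,j) then c else 0) * (if (b0,k0) = y then 1 else 0)) y + (\<lambda>(b',k'). ev L (a,j,b',k')) y)"
      by (auto simp: p ev_Cons_pt)
    have "lift2 A (ev (p#L)) (a,j,b,k) = A (\<lambda>(b',k'). ev (p#L) (a,j,b',k')) (b,k)"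
      unfolding lift2_def by simp
    also have "\<dots> = (if (a0,j0) = (a,j) then c else 0) * ev1 (LA b0 k0) (b,k) + lift2 A (ev L) (a,j,b,k)"
      unfolding e lA lB using r unfolding rep_def lift2_def by simp
    also have "\<dots> = ev (lmap2 LA (p#L)) (a,j,b,k)"
      unfolding Cons.IH by (simp add: p lmap2_def ev_append tadd_def ev_map2_pt)
    finally show "lift2 A (ev (p # L)) (a, j, b, k) = ev (lmap2 LA (p # L)) (a, j, b, k)" .
  qed
qed

definition LE1 :: "int \<Rightarrow> int \<Rightarrow> (F \<times> int \<times> int) list" where
  "LE1 a j = (if j \<in> {1,2} then [(qint (3-j), (a, j-1))] else [])"
definition LF1 :: "int \<Rightarrow> int \<Rightarrow> (F \<times> int \<times> int) list" where
  "LF1 a j = (if j \<in> {0,1} then [(qint (j+1), (a, j+1))] else [])"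
definition LE0 :: "int \<Rightarrow> int \<Rightarrow> (F \<times> int \<times> int) list" where
  "LE0 a j = (if j \<in> {0,1} then [(qint (j+1), (a+1, j+1))] else [])"
definition LF0 :: "int \<Rightarrow> int \<Rightarrow> (F \<times> int \<times> int) list" where
  "LF0 a j = (if j \<in> {1,2} then [(qint (3-j), (a-1, j-1))] else [])"
definition LQ :: "int \<times> int \<times> int \<Rightarrow> int \<Rightarrow> int \<Rightarrow> (F \<times> int \<times> int) list" where
  "LQ h a j = [(qq powi pairing h a j, (a, j))]"
definition LZ :: "int \<Rightarrow> int \<Rightarrow> int \<Rightarrow> (F \<times> int \<times> int) list" where
  "LZ b a j = [(1, (a+b, j))]"

lemma rep_E1: "rep opE1 LE1"
  unfolding rep_def opE1_def LE1_def ev1_def by (auto simp: fun_eq_iff)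
lemma rep_F1: "rep opF1 LF1"
  unfolding rep_def opF1_def LF1_def ev1_def by (auto simp: fun_eq_iff)
lemma rep_E0: "rep opE0 LE0"
  unfolding rep_def opE0_def LE0_def ev1_def by (auto simp: fun_eq_iff)
lemma rep_F0: "rep opF0 LF0"
  unfolding rep_def opF0_def LF0_def ev1_def by (auto simp: fun_eq_iff)
lemma rep_Q: "rep (opQ h) (LQ h)"
  unfolding rep_def opQ_def LQ_def ev1_def by (auto simp: fun_eq_iff)
lemma rep_Z: "rep (opZ b) (LZ b)"
  unfolding rep_def opZ_def LZ_def ev1_def by (auto simp: fun_eq_iff)

lemmas lev = lift1_ev[OF lin1_E0 rep_E0] lift2_ev[OF lin1_E0 rep_E0]
  lift1_ev[OF lin1_E1 rep_E1] lift2_ev[OF lin1_E1 rep_E1]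
  lift1_ev[OF lin1_F0 rep_F0] lift2_ev[OF lin1_F0 rep_F0]
  lift1_ev[OF lin1_F1 rep_F1] lift2_ev[OF lin1_F1 rep_F1]
  lift1_ev[OF lin1_Q rep_Q] lift2_ev[OF lin1_Q rep_Q]
  lift1_ev[OF lin1_Z rep_Z] lift2_ev[OF lin1_Z rep_Z]

lemma DE0_ev: "DE 0 (ev L) = ev (lmap1 LE0 L @ lmap1 (LQ (neg_h (coroot 0))) (lmap2 LE0 L))"
  unfolding DE_def opE_def by (simp add: lev ev_append)
lemma DE1_ev: "DE 1 (ev L) = ev (lmap1 LE1 L @ lmap1 (LQ (neg_h (coroot 1))) (lmap2 LE1 L))"
  unfolding DE_def opE_def by (simp add: lev ev_append)
lemma DF0_ev: "DF 0 (ev L) = ev (lmap1 LF0 (lmap2 (LQ (coroot 0)) L) @ lmap2 LF0 L)"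
  unfolding DF_def opF_def by (simp add: lev ev_append)
lemma DF1_ev: "DF 1 (ev L) = ev (lmap1 LF1 (lmap2 (LQ (coroot 1)) L) @ lmap2 LF1 L)"
  unfolding DF_def opF_def by (simp add: lev ev_append)
lemma ZZ_ev: "ZZ (ev L) = ev (lmap1 (LZ 1) (lmap2 (LZ 1) L))"
  unfolding ZZ_def by (simp add: lev ev_append)
lemma ZZi_ev: "ZZi (ev L) = ev (lmap1 (LZ (-1)) (lmap2 (LZ (-1)) L))"
  unfolding ZZi_def by (simp add: lev ev_append)
lemma ZS_ev: "ZS (ev L) = ev (lmap1 (LZ 1) L @ lmap2 (LZ 1) L)"
  unfolding ZS_def by (simp add: lev ev_append)

lemma bt_ev: "bt a j b k = ev [(1,(a,j,b,k))]"
  by (auto simp: bt_def ev_def fun_eq_iff)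
lemma tadd_ev: "tadd (ev xs) (ev ys) = ev (xs @ ys)" by (simp add: ev_append)
lemma tsmult_ev: "tsmult c (ev xs) = ev (map (\<lambda>(d,t). (c*d,t)) xs)"
  by (induction xs) (auto simp: ev_def tsmult_def fun_eq_iff algebra_simps)

lemma ev_out: "x \<notin> set (map snd L) \<Longrightarrow> ev L x = 0"
  by (induction L) (auto simp: ev_def)
lemma ev_eqI: "\<forall>t\<in>set (map snd (L1 @ L2)). ev L1 t = ev L2 t \<Longrightarrow> ev L1 = ev L2"
proof (rule ext)
  fix x assume H: "\<forall>t\<in>set (map snd (L1 @ L2)). ev L1 t = ev L2 t"
  show "ev L1 x = ev L2 x"
  proof (cases "x \<in> set (map snd (L1 @ L2))")
    case True then show ?thesis using H by blast
  next
    case False then show ?thesis using ev_out[of x L1] ev_out[of x L2] by auto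
  qed
qed

lemma ev_Nil_pt: "ev [] x = 0" by (simp add: ev_def)
lemma qq_powi_neg_num: "qq powi (- numeral n) = inverse (qq ^ numeral n)"
  by (simp add: power_int_minus)
lemma qq_powi_neg1: "qq powi (- 1) = inverse qq"
  by (simp add: power_int_minus)

lemmas comp_simps = ev_Cons_pt ev_Nil_pt lmap1_def lmap2_def LE0_def LE1_def LF0_def LF1_def LQ_def LZ_def
  pairing_def neg_h_def coroot_def qq_powi_neg_num qq_powi_neg1 qint2 qint3 qint4

lemmas to_ev = bt_ev tadd_ev tsmult_ev DE0_ev DE1_ev DF0_ev DF1_ev ZZ_ev ZZi_ev ZS_ev

lemma C_nth: "C_list!0 = bt 0 0 0 0"
  "C_list!1 = tadd (bt 0 0 0 1) (tsmult (qq^2) (bt 0 1 0 0))"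
  "C_list!2 = tadd (bt 0 0 0 2) (tadd (tsmult qq (bt 0 1 0 1)) (tsmult (qq^4) (bt 0 2 0 0)))"
  "C_list!3 = tadd (bt 0 1 0 2) (tsmult (qq^2) (bt 0 2 0 1))"
  "C_list!4 = bt 0 2 0 2"
  "C_list!5 = tadd (bt 1 2 0 1) (tsmult (qq^2) (bt 0 1 1 2))"
  "C_list!6 = tadd (bt 2 2 0 0) (tadd (tsmult qq (bt 1 1 1 1)) (tsmult (qq^4) (bt 0 0 2 2)))"
  "C_list!7 = tadd (bt 1 1 0 0) (tsmult (qq^2) (bt 0 0 1 1))"
  "C_list!8 = tadd (bt 1 1 0 1) (tadd (tsmult (qq^2) (bt 0 1 1 1))
        (tsmult (qq^2 * qint 2) (tadd (bt 0 0 1 2) (bt 1 2 0 0))))"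
  by (simp_all add: C_list_def)

lemma act_E0_0: "DE 0 (C_list!0) = (C_list!7)"
  apply (simp only: C_nth to_ev)
  apply (rule ev_eqI)
  by (simp add: comp_simps, (intro conjI)?, (simp_all add: field_simps)?, ((algebra)+)?)

lemma act_E1_0: "DE 1 (C_list!0) = ev []"
  apply (simp only: C_nth to_ev)
  apply (rule ev_eqI)
  by (simp add: comp_simps, (intro conjI)?, (simp_all add: field_simps)?, ((algebra)+)?)

lemma act_F0_0: "DF 0 (C_list!0) = ev []"
  apply (simp only: C_nth to_ev)
  apply (rule ev_eqI)
  by (simp add: comp_simps, (intro conjI)?, (simp_all add: field_simps)?, ((algebra)+)?)

lemma act_F1_0: "DF 1 (C_list!0) = (C_list!1)"
  apply (simp only: C_nth to_ev)
  apply (rule ev_eqI)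
  by (simp add: comp_simps, (intro conjI)?, (simp_all add: field_simps)?, ((algebra)+)?)

lemma act_E0_1: "DE 0 (C_list!1) = (C_list!8)"
  apply (simp only: C_nth to_ev)
  apply (rule ev_eqI)
  by (simp add: comp_simps, (intro conjI)?, (simp_all add: field_simps)?, ((algebra)+)?)

lemma act_E1_1: "DE 1 (C_list!1) = (tsmult (qint 4) (C_list!0))"
  apply (simp only: C_nth to_ev)
  apply (rule ev_eqI)
  by (simp add: comp_simps, (intro conjI)?, (simp_all add: field_simps)?, ((algebra)+)?)

lemma act_F0_1: "DF 0 (C_list!1) = (tsmult (qint 2) (ZZi (ZS (C_list!0))))"
  apply (simp only: C_nth to_ev)
  apply (rule ev_eqI)
  by (simp add: comp_simps, (intro conjI)?, (simp_all add: field_simps)?, ((algebra)+)?)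

lemma act_F1_1: "DF 1 (C_list!1) = (tsmult (qint 2) (C_list!2))"
  apply (simp only: C_nth to_ev)
  apply (rule ev_eqI)
  by (simp add: comp_simps, (intro conjI)?, (simp_all add: field_simps)?, ((algebra)+)?)

lemma act_E0_2: "DE 0 (C_list!2) = (tadd (ZS (C_list!3)) (C_list!5))"
  apply (simp only: C_nth to_ev)
  apply (rule ev_eqI)
  by (simp add: comp_simps, (intro conjI)?, (simp_all add: field_simps)?, ((algebra)+)?)

lemma act_E1_2: "DE 1 (C_list!2) = (tsmult (qint 3) (C_list!1))"
  apply (simp only: C_nth to_ev)
  apply (rule ev_eqI)
  by (simp add: comp_simps, (intro conjI)?, (simp_all add: field_simps)?, ((algebra)+)?)

lemma act_F0_2: "DF 0 (C_list!2) = (tadd (ZZi (ZS (C_list!1))) (ZZi (C_list!7)))"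
  apply (simp only: C_nth to_ev)
  apply (rule ev_eqI)
  by (simp add: comp_simps, (intro conjI)?, (simp_all add: field_simps)?, ((algebra)+)?)

lemma act_F1_2: "DF 1 (C_list!2) = (tsmult (qint 3) (C_list!3))"
  apply (simp only: C_nth to_ev)
  apply (rule ev_eqI)
  by (simp add: comp_simps, (intro conjI)?, (simp_all add: field_simps)?, ((algebra)+)?)

lemma act_E0_3: "DE 0 (C_list!3) = (tsmult (qint 2) (ZS (C_list!4)))"
  apply (simp only: C_nth to_ev)
  apply (rule ev_eqI)
  by (simp add: comp_simps, (intro conjI)?, (simp_all add: field_simps)?, ((algebra)+)?)

lemma act_E1_3: "DE 1 (C_list!3) = (tsmult (qint 2) (C_list!2))"
  apply (simp only: C_nth to_ev)
  apply (rule ev_eqI)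
  by (simp add: comp_simps, (intro conjI)?, (simp_all add: field_simps)?, ((algebra)+)?)

lemma act_F0_3: "DF 0 (C_list!3) = (ZZi (C_list!8))"
  apply (simp only: C_nth to_ev)
  apply (rule ev_eqI)
  by (simp add: comp_simps, (intro conjI)?, (simp_all add: field_simps)?, ((algebra)+)?)

lemma act_F1_3: "DF 1 (C_list!3) = (tsmult (qint 4) (C_list!4))"
  apply (simp only: C_nth to_ev)
  apply (rule ev_eqI)
  by (simp add: comp_simps, (intro conjI)?, (simp_all add: field_simps)?, ((algebra)+)?)

lemma act_E0_4: "DE 0 (C_list!4) = ev []"
  apply (simp only: C_nth to_ev)
  apply (rule ev_eqI)
  by (simp add: comp_simps, (intro conjI)?, (simp_all add: field_simps)?, ((algebra)+)?)

lemma act_E1_4: "DE 1 (C_list!4) = (C_list!3)"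
  apply (simp only: C_nth to_ev)
  apply (rule ev_eqI)
  by (simp add: comp_simps, (intro conjI)?, (simp_all add: field_simps)?, ((algebra)+)?)

lemma act_F0_4: "DF 0 (C_list!4) = (ZZi (C_list!5))"
  apply (simp only: C_nth to_ev)
  apply (rule ev_eqI)
  by (simp add: comp_simps, (intro conjI)?, (simp_all add: field_simps)?, ((algebra)+)?)

lemma act_F1_4: "DF 1 (C_list!4) = ev []"
  apply (simp only: C_nth to_ev)
  apply (rule ev_eqI)
  by (simp add: comp_simps, (intro conjI)?, (simp_all add: field_simps)?, ((algebra)+)?)

lemma act_E0_5: "DE 0 (C_list!5) = (tsmult (qint 4) (ZZ (C_list!4)))"
  apply (simp only: C_nth to_ev)
  apply (rule ev_eqI)
  by (simp add: comp_simps, (intro conjI)?, (simp_all add: field_simps)?, ((algebra)+)?)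

lemma act_E1_5: "DE 1 (C_list!5) = (C_list!8)"
  apply (simp only: C_nth to_ev)
  apply (rule ev_eqI)
  by (simp add: comp_simps, (intro conjI)?, (simp_all add: field_simps)?, ((algebra)+)?)

lemma act_F0_5: "DF 0 (C_list!5) = (tsmult (qint 2) (ZZi (C_list!6)))"
  apply (simp only: C_nth to_ev)
  apply (rule ev_eqI)
  by (simp add: comp_simps, (intro conjI)?, (simp_all add: field_simps)?, ((algebra)+)?)

lemma act_F1_5: "DF 1 (C_list!5) = (tsmult (qint 2) (ZS (C_list!4)))"
  apply (simp only: C_nth to_ev)
  apply (rule ev_eqI)
  by (simp add: comp_simps, (intro conjI)?, (simp_all add: field_simps)?, ((algebra)+)?)

lemma act_E0_6: "DE 0 (C_list!6) = (tsmult (qint 3) (ZZ (C_list!5)))"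
  apply (simp only: C_nth to_ev)
  apply (rule ev_eqI)
  by (simp add: comp_simps, (intro conjI)?, (simp_all add: field_simps)?, ((algebra)+)?)

lemma act_E1_6: "DE 1 (C_list!6) = (tadd (ZZ (C_list!1)) (ZS (C_list!7)))"
  apply (simp only: C_nth to_ev)
  apply (rule ev_eqI)
  by (simp add: comp_simps, (intro conjI)?, (simp_all add: field_simps)?, ((algebra)+)?)

lemma act_F0_6: "DF 0 (C_list!6) = (tsmult (qint 3) (C_list!7))"
  apply (simp only: C_nth to_ev)
  apply (rule ev_eqI)
  by (simp add: comp_simps, (intro conjI)?, (simp_all add: field_simps)?, ((algebra)+)?)

lemma act_F1_6: "DF 1 (C_list!6) = (tadd (ZZ (C_list!3)) (ZS (C_list!5)))"
  apply (simp only: C_nth to_ev)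
  apply (rule ev_eqI)
  by (simp add: comp_simps, (intro conjI)?, (simp_all add: field_simps)?, ((algebra)+)?)

lemma act_E0_7: "DE 0 (C_list!7) = (tsmult (qint 2) (C_list!6))"
  apply (simp only: C_nth to_ev)
  apply (rule ev_eqI)
  by (simp add: comp_simps, (intro conjI)?, (simp_all add: field_simps)?, ((algebra)+)?)

lemma act_E1_7: "DE 1 (C_list!7) = (tsmult (qint 2) (ZS (C_list!0)))"
  apply (simp only: C_nth to_ev)
  apply (rule ev_eqI)
  by (simp add: comp_simps, (intro conjI)?, (simp_all add: field_simps)?, ((algebra)+)?)

lemma act_F0_7: "DF 0 (C_list!7) = (tsmult (qint 4) (C_list!0))"
  apply (simp only: C_nth to_ev)
  apply (rule ev_eqI)
  by (simp add: comp_simps, (intro conjI)?, (simp_all add: field_simps)?, ((algebra)+)?)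

lemma act_F1_7: "DF 1 (C_list!7) = (C_list!8)"
  apply (simp only: C_nth to_ev)
  apply (rule ev_eqI)
  by (simp add: comp_simps, (intro conjI)?, (simp_all add: field_simps)?, ((algebra)+)?)

lemma act_E0_8: "DE 0 (C_list!8) = (tadd (tsmult (qint 2) (ZZ (C_list!3))) (tsmult (qint 2) (ZS (C_list!5))))"
  apply (simp only: C_nth to_ev)
  apply (rule ev_eqI)
  by (simp add: comp_simps, (intro conjI)?, (simp_all add: field_simps)?, ((algebra)+)?)

lemma act_E1_8: "DE 1 (C_list!8) = (tadd (tsmult (qint 2) (ZS (C_list!1))) (tsmult (qint 2) (C_list!7)))"
  apply (simp only: C_nth to_ev)
  apply (rule ev_eqI)
  by (simp add: comp_simps, (intro conjI)?, (simp_all add: field_simps)?, ((algebra)+)?)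

lemma act_F0_8: "DF 0 (C_list!8) = (tadd (tsmult (qint 2) (C_list!1)) (tsmult (qint 2) (ZZi (ZS (C_list!7)))))"
  apply (simp only: C_nth to_ev)
  apply (rule ev_eqI)
  by (simp add: comp_simps, (intro conjI)?, (simp_all add: field_simps)?, ((algebra)+)?)

lemma act_F1_8: "DF 1 (C_list!8) = (tadd (tsmult (qint 2) (ZS (C_list!3))) (tsmult (qint 2) (C_list!5)))"
  apply (simp only: C_nth to_ev)
  apply (rule ev_eqI)
  by (simp add: comp_simps, (intro conjI)?, (simp_all add: field_simps)?, ((algebra)+)?)

definition Mt :: "nat \<Rightarrow> nat \<Rightarrow> nat \<Rightarrow> nat \<Rightarrow> tens" where
  "Mt i m n p = (ZZ ^^ m) ((ZZi ^^ n) ((ZS ^^ p) (C_list ! i)))"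
definition Mgen :: "tens set" where
  "Mgen = {Mt i m n p | i m n p. i < 9}"

inductive_set lspan :: "tens set \<Rightarrow> tens set" for G :: "tens set" where
  gen: "g \<in> G \<Longrightarrow> g \<in> lspan G"
| zero: "(\<lambda>x. 0) \<in> lspan G"
| add: "f \<in> lspan G \<Longrightarrow> h \<in> lspan G \<Longrightarrow> tadd f h \<in> lspan G"
| smult: "f \<in> lspan G \<Longrightarrow> tsmult c f \<in> lspan G"

lemma lspan_closed:
  assumes "linop T" "\<And>g. g \<in> G \<Longrightarrow> T g \<in> lspan G" "f \<in> lspan G"
  shows "T f \<in> lspan G"
  using assms(3)
proof induction
  case (gen g) then show ?case using assms(2) by blast
next
  case zero then show ?case using linop_zero[OF assms(1)] lspan.zero by simp
next
  case (add f h) then show ?case using assms(1) unfolding linop_def by (simp add: lspan.add)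
next
  case (smult f c) then show ?case using assms(1) unfolding linop_def by (simp add: lspan.smult)
qed

lemma funpow_comm: assumes "\<And>f. T (Z f) = Z (T f)" shows "T ((Z ^^ m) f) = (Z ^^ m) (T f)"
  by (induction m) (simp_all add: assms)

lemma ZZi_ZZ_comm: "ZZi (ZZ f) = ZZ (ZZi f)" by (simp add: ZZ_ZZi ZZi_ZZ)
lemma ZS_ZZ_comm: "ZS (ZZ f) = ZZ (ZS f)" by (simp add: ZZ_ZS)
lemma ZS_ZZi_comm: "ZS (ZZi f) = ZZi (ZS f)" by (simp add: ZZi_ZS)

lemma Mgen_I: "i < 9 \<Longrightarrow> Mt i m n p \<in> Mgen" unfolding Mgen_def by blast

lemma lspan_ZZ: "f \<in> lspan Mgen \<Longrightarrow> ZZ f \<in> lspan Mgen"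
proof (rule lspan_closed[OF linop_ZZ])
  fix g assume "g \<in> Mgen"
  then obtain i m n p where "i < 9" "g = Mt i m n p" unfolding Mgen_def by blast
  then have "ZZ g = Mt i (Suc m) n p" by (simp add: Mt_def)
  then show "ZZ g \<in> lspan Mgen" using \<open>i < 9\<close> by (simp add: Mgen_I lspan.gen)
qed
lemma lspan_ZZi: "f \<in> lspan Mgen \<Longrightarrow> ZZi f \<in> lspan Mgen"
proof (rule lspan_closed[OF linop_ZZi])
  fix g assume "g \<in> Mgen"
  then obtain i m n p where "i < 9" "g = Mt i m n p" unfolding Mgen_def by blast
  then have "ZZi g = Mt i m (Suc n) p" by (simp add: Mt_def funpow_comm[of ZZi ZZ, OF ZZi_ZZ_comm])
  then show "ZZi g \<in> lspan Mgen" using \<open>i < 9\<close> by (simp add: Mgen_I lspan.gen)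
qed
lemma lspan_ZS: "f \<in> lspan Mgen \<Longrightarrow> ZS f \<in> lspan Mgen"
proof (rule lspan_closed[OF linop_ZS])
  fix g assume "g \<in> Mgen"
  then obtain i m n p where "i < 9" "g = Mt i m n p" unfolding Mgen_def by blast
  then have "ZS g = Mt i m n (Suc p)"
    by (simp add: Mt_def funpow_comm[of ZS ZZ, OF ZS_ZZ_comm] funpow_comm[of ZS ZZi, OF ZS_ZZi_comm])
  then show "ZS g \<in> lspan Mgen" using \<open>i < 9\<close> by (simp add: Mgen_I lspan.gen)
qed
lemma lspan_C: "i < 9 \<Longrightarrow> C_list ! i \<in> lspan Mgen"
  using Mgen_I[of i 0 0 0] by (simp add: Mt_def lspan.gen)

lemma lspan_pow: "f \<in> lspan Mgen \<Longrightarrow> (ZZ ^^ m) ((ZZi ^^ n) ((ZS ^^ p) f)) \<in> lspan Mgen"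
proof -
  assume f: "f \<in> lspan Mgen"
  have 1: "(ZS ^^ p) f \<in> lspan Mgen" by (induction p) (simp_all add: f lspan_ZS)
  have 2: "(ZZi ^^ n) ((ZS ^^ p) f) \<in> lspan Mgen" by (induction n) (simp_all add: 1 lspan_ZZi)
  show ?thesis by (induction m) (simp_all add: 2 lspan_ZZ)
qed

lemma lspan_op:
  assumes "linop T" "\<And>f. T (ZZ f) = ZZ (T f)" "\<And>f. T (ZZi f) = ZZi (T f)" "\<And>f. T (ZS f) = ZS (T f)"
    "\<And>i. i < 9 \<Longrightarrow> T (C_list ! i) \<in> lspan Mgen"
    "f \<in> lspan Mgen"
  shows "T f \<in> lspan Mgen"
proof (rule lspan_closed[OF assms(1) _ assms(6)])
  fix g assume "g \<in> Mgen"
  then obtain i m n p where i: "i < 9" and g: "g = Mt i m n p" unfolding Mgen_def by blast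
  have "T g = (ZZ ^^ m) ((ZZi ^^ n) ((ZS ^^ p) (T (C_list ! i))))"
    unfolding g Mt_def by (simp add: funpow_comm[of T ZZ, OF assms(2)] funpow_comm[of T ZZi, OF assms(3)] funpow_comm[of T ZS, OF assms(4)])
  then show "T g \<in> lspan Mgen" using lspan_pow assms(5)[OF i] by simp
qed

lemma less9: "k < (9::nat) \<Longrightarrow> k = 0 \<or> k = 1 \<or> k = 2 \<or> k = 3 \<or> k = 4 \<or> k = 5 \<or> k = 6 \<or> k = 7 \<or> k = 8"
  by auto

lemma lspan_ev_Nil: "ev [] \<in> lspan Mgen" using lspan.zero by (simp add: ev_Nil)

lemmas lspan_intros = lspan.add lspan.smult lspan_ZZ lspan_ZZi lspan_ZS lspan_C lspan_ev_Nil

lemma DE0_C: assumes "k < 9" shows "DE 0 (C_list ! k) \<in> lspan Mgen"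
  using less9[OF assms] by (elim disjE; simp only: act_E0_0 act_E0_1 act_E0_2 act_E0_3 act_E0_4 act_E0_5 act_E0_6 act_E0_7 act_E0_8; intro lspan_intros; simp)
lemma DE1_C: assumes "k < 9" shows "DE 1 (C_list ! k) \<in> lspan Mgen"
  using less9[OF assms] by (elim disjE; simp only: act_E1_0 act_E1_1 act_E1_2 act_E1_3 act_E1_4 act_E1_5 act_E1_6 act_E1_7 act_E1_8; intro lspan_intros; simp)
lemma DF0_C: assumes "k < 9" shows "DF 0 (C_list ! k) \<in> lspan Mgen"
  using less9[OF assms] by (elim disjE; simp only: act_F0_0 act_F0_1 act_F0_2 act_F0_3 act_F0_4 act_F0_5 act_F0_6 act_F0_7 act_F0_8; intro lspan_intros; simp)
lemma DF1_C: assumes "k < 9" shows "DF 1 (C_list ! k) \<in> lspan Mgen"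
  using less9[OF assms] by (elim disjE; simp only: act_F1_0 act_F1_1 act_F1_2 act_F1_3 act_F1_4 act_F1_5 act_F1_6 act_F1_7 act_F1_8; intro lspan_intros; simp)

lemma C_homog: "homog 0 0 (C_list!0)" "homog 1 0 (C_list!1)" "homog 2 0 (C_list!2)"
  "homog 3 0 (C_list!3)" "homog 4 0 (C_list!4)" "homog 3 1 (C_list!5)" "homog 2 2 (C_list!6)"
  "homog 1 1 (C_list!7)" "homog 2 1 (C_list!8)"
  unfolding homog_def C_nth bt_def tadd_def tsmult_def by auto

lemma C_homog_ex: "i < 9 \<Longrightarrow> \<exists>s t. homog s t (C_list!i)"
  using C_homog by (elim less9[elim_format] disjE; blast)

lemma Mt_homog: "i < 9 \<Longrightarrow> \<exists>s t. homog s t (Mt i m n p)"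
proof -
  assume "i < 9"
  then obtain s t where h: "homog s t (C_list!i)" using C_homog_ex by blast
  have 1: "\<exists>t. homog s t ((ZS ^^ p) (C_list ! i))"
    by (induction p) (use h homog_ZS in auto)
  have 2: "\<exists>t. homog s t ((ZZi ^^ n) ((ZS ^^ p) (C_list ! i)))"
    by (induction n) (use 1 homog_ZZi in auto)
  have 3: "\<exists>t. homog s t ((ZZ ^^ m) ((ZZi ^^ n) ((ZS ^^ p) (C_list ! i))))"
    by (induction m) (use 2 homog_ZZ in auto)
  then show ?thesis unfolding Mt_def by blast
qed

lemma lspan_DQ: "f \<in> lspan Mgen \<Longrightarrow> DQ h f \<in> lspan Mgen"
proof (rule lspan_closed[OF linop_DQ])
  fix g assume "g \<in> Mgen"
  then obtain i m n p where i: "i < 9" and g: "g = Mt i m n p" unfolding Mgen_def by blast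
  obtain s t where "homog s t g" using Mt_homog[OF i] g by blast
  then have "DQ h g = tsmult (qq powi (wq h s t)) g" by (rule DQ_homog)
  then show "DQ h g \<in> lspan Mgen" using Mgen_I[OF i] g by (simp add: lspan.gen lspan.smult)
qed

lemma N_sub_lspan: "f \<in> Ngen (bt 0 0 0 0) \<Longrightarrow> f \<in> lspan Mgen"
proof (induction rule: Ngen.induct)
  case gen
  then show ?case using lspan_C[of 0] by (simp add: C_nth)
next
  case zero then show ?case by (rule lspan.zero)
next
  case (add f h) then show ?case by (blast intro: lspan.add)
next
  case (smult f c) then show ?case by (blast intro: lspan.smult)
next
  case (e f i)
  then have "i = 0 \<or> i = 1" by auto
  then show ?case
  proof
    assume "i = 0" then show ?thesis
      by (simp only:) (rule lspan_op[OF linop_DE DE_ZZ DE_ZZi DE_ZS DE0_C e.IH])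
  next
    assume "i = 1" then show ?thesis
      by (simp only:) (rule lspan_op[OF linop_DE DE_ZZ DE_ZZi DE_ZS DE1_C e.IH])
  qed
next
  case (f f i)
  then have "i = 0 \<or> i = 1" by auto
  then show ?case
  proof
    assume "i = 0" then show ?thesis
      by (simp only:) (rule lspan_op[OF linop_DF DF_ZZ DF_ZZi DF_ZS DF0_C f.IH])
  next
    assume "i = 1" then show ?thesis
      by (simp only:) (rule lspan_op[OF linop_DF DF_ZZ DF_ZZi DF_ZS DF1_C f.IH])
  qed
next
  case (qh f h) then show ?case by (blast intro: lspan_DQ)
next
  case (zz f) then show ?case by (blast intro: lspan_ZZ)
next
  case (zzi f) then show ?case by (blast intro: lspan_ZZi)
next
  case (zs f) then show ?case by (blast intro: lspan_ZS)
qed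

lemma inv_eq: assumes "tsmult c f = h" "c \<noteq> 0" shows "f = tsmult (inverse c) h"
proof (rule ext)
  fix x
  from assms(1) have "h x = c * f x" by (auto simp: tsmult_def)
  then show "f x = tsmult (inverse c) h x" using assms(2) by (simp add: tsmult_def)
qed

lemma Ngen_pow: "f \<in> Ngen g \<Longrightarrow> (ZZ ^^ m) ((ZZi ^^ n) ((ZS ^^ p) f)) \<in> Ngen g"
proof -
  assume f: "f \<in> Ngen g"
  have 1: "(ZS ^^ p) f \<in> Ngen g" by (induction p) (simp_all add: f Ngen.zs)
  have 2: "(ZZi ^^ n) ((ZS ^^ p) f) \<in> Ngen g" by (induction n) (simp_all add: 1 Ngen.zzi)
  show ?thesis by (induction m) (simp_all add: 2 Ngen.zz)
qed

lemma C_in_N: assumes "k < 9" shows "C_list ! k \<in> N"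
proof -
  let ?G = "Ngen (bt 0 0 0 0)"
  have c0: "C_list!0 \<in> ?G" unfolding C_nth by (rule Ngen.gen)
  have c1: "C_list!1 \<in> ?G" unfolding act_F1_0[symmetric]
    by (rule Ngen.f[OF c0]) simp
  have c2: "C_list!2 \<in> ?G" unfolding inv_eq[OF act_F1_1[symmetric] qint2_nz]
    by (rule Ngen.smult, rule Ngen.f[OF c1]) simp
  have c3: "C_list!3 \<in> ?G" unfolding inv_eq[OF act_F1_2[symmetric] qint3_nz]
    by (rule Ngen.smult, rule Ngen.f[OF c2]) simp
  have c4: "C_list!4 \<in> ?G" unfolding inv_eq[OF act_F1_3[symmetric] qint4_nz]
    by (rule Ngen.smult, rule Ngen.f[OF c3]) simp
  have c7: "C_list!7 \<in> ?G" unfolding act_E0_0[symmetric]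
    by (rule Ngen.e[OF c0]) simp
  have c8: "C_list!8 \<in> ?G" unfolding act_F1_7[symmetric]
    by (rule Ngen.f[OF c7]) simp
  have c6: "C_list!6 \<in> ?G" unfolding inv_eq[OF act_E0_7[symmetric] qint2_nz]
    by (rule Ngen.smult, rule Ngen.e[OF c7]) simp
  have "C_list!5 = ZZ (DF 0 (C_list!4))" by (simp add: act_F0_4 ZZ_ZZi)
  then have c5: "C_list!5 \<in> ?G" by (simp add: Ngen.zz Ngen.f[OF c4])
  show ?thesis unfolding N_def using less9[OF assms] c0 c1 c2 c3 c4 c5 c6 c7 c8 by auto
qed

lemma lspan_sub_N: "f \<in> lspan Mgen \<Longrightarrow> f \<in> N"
proof (induction rule: lspan.induct)
  case (gen g)
  then obtain i m n p where "i < 9" "g = Mt i m n p" unfolding Mgen_def by blast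
  then show ?case using C_in_N Ngen_pow unfolding Mt_def N_def by blast
next
  case zero then show ?case unfolding N_def by (rule Ngen.zero)
next
  case (add f h) then show ?case unfolding N_def by (blast intro: Ngen.add)
next
  case (smult f c) then show ?case unfolding N_def by (blast intro: Ngen.smult)
qed

lemma N_eq_lspan: "N = lspan Mgen"
  using N_sub_lspan lspan_sub_N unfolding N_def by blast

lemma Ngen_sub: "h \<in> Ngen g \<Longrightarrow> Ngen h \<subseteq> Ngen g"
proof
  fix f assume hg: "h \<in> Ngen g" and fh: "f \<in> Ngen h"
  from fh show "f \<in> Ngen g"
    by (induction rule: Ngen.induct) (auto intro: Ngen.intros hg)
qed

lemma Ngen_swap: "Ngen (bt 0 2 0 2) = Ngen (bt 0 0 0 0)"
proof
  have "bt 0 2 0 2 \<in> Ngen (bt 0 0 0 0)" using C_in_N[of 4] by (simp add: C_nth N_def)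
  then show "Ngen (bt 0 2 0 2) \<subseteq> Ngen (bt 0 0 0 0)" by (rule Ngen_sub)
next
  let ?G = "Ngen (C_list!4)"
  have c4: "C_list!4 \<in> ?G" by (rule Ngen.gen)
  have c3: "C_list!3 \<in> ?G" unfolding act_E1_4[symmetric] by (rule Ngen.e[OF c4]) simp
  have c2: "C_list!2 \<in> ?G" unfolding inv_eq[OF act_E1_3[symmetric] qint2_nz]
    by (rule Ngen.smult, rule Ngen.e[OF c3]) simp
  have c1: "C_list!1 \<in> ?G" unfolding inv_eq[OF act_E1_2[symmetric] qint3_nz]
    by (rule Ngen.smult, rule Ngen.e[OF c2]) simp
  have c0: "C_list!0 \<in> ?G" unfolding inv_eq[OF act_E1_1[symmetric] qint4_nz]
    by (rule Ngen.smult, rule Ngen.e[OF c1]) simp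
  then have "bt 0 0 0 0 \<in> Ngen (bt 0 2 0 2)" by (simp add: C_nth)
  then show "Ngen (bt 0 0 0 0) \<subseteq> Ngen (bt 0 2 0 2)" by (rule Ngen_sub)
qed

lemma ZZ_bt: "ZZ (bt a j b k) = bt (a+1) j (b+1) k"
  by (auto simp: ZZ_pt bt_def fun_eq_iff)
lemma ZZi_bt: "ZZi (bt a j b k) = bt (a-1) j (b-1) k"
  by (auto simp: ZZi_pt bt_def fun_eq_iff)

lemma diag_in_N: assumes "j \<in> {0,2}" shows "bt a j a j \<in> N"
proof -
  have b: "bt 0 j 0 j \<in> N" using assms C_in_N[of 4] Ngen.gen unfolding N_def by (auto simp: C_nth)
  have p: "(ZZ ^^ n) (bt 0 j 0 j) = bt (int n) j (int n) j" for n
    by (induction n) (simp_all add: ZZ_bt algebra_simps)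
  have m: "(ZZi ^^ n) (bt 0 j 0 j) = bt (- int n) j (- int n) j" for n
  proof (induction n)
    case 0 then show ?case by simp
  next
    case (Suc n)
    have e: "- int (Suc n) = - int n - 1" by simp
    show ?case unfolding e funpow.simps comp_def Suc.IH ZZi_bt by (rule refl)
  qed
  show ?thesis
  proof (cases "a \<ge> 0")
    case True
    then obtain n where "a = int n" by (metis nonneg_eq_int)
    then show ?thesis using Ngen_pow[of "bt 0 j 0 j" "bt 0 0 0 0" n 0 0] b p unfolding N_def by simp
  next
    case False
    then obtain n where "a = - int n" by (metis linorder_le_cases neg_0_le_iff_le nonneg_eq_int minus_minus)
    then show ?thesis using Ngen_pow[of "bt 0 j 0 j" "bt 0 0 0 0" 0 n 0] b m unfolding N_def by simp
  qed
qed

definition Mp :: "nat \<Rightarrow> nat \<times> nat \<times> nat \<Rightarrow> tens" where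
  "Mp i t = (case t of (m, n, p) \<Rightarrow> Mt i m n p)"

lemma len_C: "length C_list = 9" by (simp add: C_list_def)

lemma poly_span_alt: "poly_span C_list =
  {v. \<exists>(c :: nat \<Rightarrow> nat \<times> nat \<times> nat \<Rightarrow> F) D. finite D \<and> v = (\<lambda>x. \<Sum>i<9. \<Sum>t\<in>D. c i t * Mp i t x)}"
proof -
  have e: "(\<lambda>(m, n, p). c i (m, n, p) * (ZZ ^^ m) ((ZZi ^^ n) ((ZS ^^ p) (C_list ! i))) x) = (\<lambda>t. c i t * Mp i t x)"
    for c :: "nat \<Rightarrow> nat \<times> nat \<times> nat \<Rightarrow> F" and i x
    by (auto simp: Mp_def Mt_def fun_eq_iff)
  show ?thesis unfolding poly_span_def len_C e ..
qed

lemma lspan_sum: "finite D \<Longrightarrow> (\<And>t. t \<in> D \<Longrightarrow> f t \<in> lspan G) \<Longrightarrow> (\<lambda>x. \<Sum>t\<in>D. f t x) \<in> lspan G"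
proof (induction D rule: finite_induct)
  case empty then show ?case by (simp add: lspan.zero)
next
  case (insert a D)
  have "(\<lambda>x. \<Sum>t\<in>insert a D. f t x) = tadd (f a) (\<lambda>x. \<Sum>t\<in>D. f t x)"
    using insert.hyps by (simp add: tadd_def)
  then show ?case using insert by (simp add: lspan.add)
qed

lemma ps_sub: "v \<in> poly_span C_list \<Longrightarrow> v \<in> lspan Mgen"
proof -
  assume "v \<in> poly_span C_list"
  then obtain c D where D: "finite D" and v: "v = (\<lambda>x. \<Sum>i<9. \<Sum>t\<in>D. c i t * Mp i t x)"
    unfolding poly_span_alt by blast
  have inner: "(\<lambda>x. \<Sum>t\<in>D. tsmult (c i t) (Mp i t) x) \<in> lspan Mgen" if i: "i < 9" for i
  proof (rule lspan_sum[OF D])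
    fix t assume "t \<in> D"
    obtain m n p where t: "t = (m,n,p)" by (cases t) auto
    have "Mp i t \<in> lspan Mgen" unfolding t Mp_def using Mgen_I[OF i] by (simp add: lspan.gen)
    then show "tsmult (c i t) (Mp i t) \<in> lspan Mgen" by (rule lspan.smult)
  qed
  have "(\<lambda>x. \<Sum>i<9. (\<lambda>x. \<Sum>t\<in>D. tsmult (c i t) (Mp i t) x) x) \<in> lspan Mgen"
    by (rule lspan_sum) (auto intro: inner)
  then show ?thesis unfolding v by (simp add: tsmult_def)
qed

lemma ps_I: "finite D \<Longrightarrow> v = (\<lambda>x. \<Sum>i<9. \<Sum>t\<in>D. c i t * Mp i t x) \<Longrightarrow> v \<in> poly_span C_list"
  unfolding poly_span_alt by blast

lemma sub_ps: "v \<in> lspan Mgen \<Longrightarrow> v \<in> poly_span C_list"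
proof (induction rule: lspan.induct)
  case (gen g)
  then obtain i m n p where i: "i < 9" and g: "g = Mt i m n p" unfolding Mgen_def by blast
  let ?c = "\<lambda>i' t. if i' = i \<and> t = (m,n,p) then (1::F) else 0"
  have "(\<Sum>i'<9. \<Sum>t\<in>{(m,n,p)}. ?c i' t * Mp i' t x) = g x" for x
  proof -
    have "(\<Sum>i'<9. \<Sum>t\<in>{(m,n,p)}. ?c i' t * Mp i' t x) = (\<Sum>i'<9. if i' = i then Mp i' (m,n,p) x else 0)"
      by (rule sum.cong) auto
    also have "\<dots> = Mp i (m,n,p) x" using i by (simp add: sum.delta)
    finally show ?thesis by (simp add: g Mp_def)
  qed
  then have "g = (\<lambda>x. \<Sum>i'<9. \<Sum>t\<in>{(m,n,p)}. ?c i' t * Mp i' t x)" by auto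
  then show ?case by (rule ps_I[rotated]) simp
next
  case zero
  have "(\<lambda>x::key. 0::F) = (\<lambda>x. \<Sum>i<9. \<Sum>t\<in>{}. (\<lambda>_ _. 0) i t * Mp i t x)" by simp
  then show ?case by (rule ps_I[rotated]) simp
next
  case (add f h)
  from add.IH(1) obtain c1 D1 where D1: "finite D1" and f: "f = (\<lambda>x. \<Sum>i<9. \<Sum>t\<in>D1. c1 i t * Mp i t x)"
    unfolding poly_span_alt by blast
  from add.IH(2) obtain c2 D2 where D2: "finite D2" and h: "h = (\<lambda>x. \<Sum>i<9. \<Sum>t\<in>D2. c2 i t * Mp i t x)"
    unfolding poly_span_alt by blast
  let ?D = "D1 \<union> D2"
  let ?c = "\<lambda>i t. (if t \<in> D1 then c1 i t else 0) + (if t \<in> D2 then c2 i t else 0)"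
  have s1: "(\<Sum>t\<in>?D. (if t \<in> D1 then c1 i t * Mp i t x else 0)) = (\<Sum>t\<in>D1. c1 i t * Mp i t x)" for i x
    using sum.inter_restrict[of ?D "\<lambda>t. c1 i t * Mp i t x" D1] D1 D2 by (simp add: Int_absorb1)
  have s2: "(\<Sum>t\<in>?D. (if t \<in> D2 then c2 i t * Mp i t x else 0)) = (\<Sum>t\<in>D2. c2 i t * Mp i t x)" for i x
    using sum.inter_restrict[of ?D "\<lambda>t. c2 i t * Mp i t x" D2] D1 D2 by (simp add: Int_absorb1)
  have "(\<Sum>t\<in>?D. ?c i t * Mp i t x) = (\<Sum>t\<in>D1. c1 i t * Mp i t x) + (\<Sum>t\<in>D2. c2 i t * Mp i t x)" for i x
  proof -
    have "(\<Sum>t\<in>?D. ?c i t * Mp i t x) = (\<Sum>t\<in>?D. (if t \<in> D1 then c1 i t * Mp i t x else 0) + (if t \<in> D2 then c2 i t * Mp i t x else 0))"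
      by (rule sum.cong) (auto simp: algebra_simps)
    also have "\<dots> = (\<Sum>t\<in>D1. c1 i t * Mp i t x) + (\<Sum>t\<in>D2. c2 i t * Mp i t x)"
      by (simp add: sum.distrib s1 s2)
    finally show ?thesis .
  qed
  then have "tadd f h = (\<lambda>x. \<Sum>i<9. \<Sum>t\<in>?D. ?c i t * Mp i t x)"
    by (simp add: f h tadd_def sum.distrib fun_eq_iff)
  then show ?case by (rule ps_I[rotated]) (simp add: D1 D2)
next
  case (smult f d)
  from smult.IH obtain c D where D: "finite D" and f: "f = (\<lambda>x. \<Sum>i<9. \<Sum>t\<in>D. c i t * Mp i t x)"
    unfolding poly_span_alt by blast
  have "tsmult d f = (\<lambda>x. \<Sum>i<9. \<Sum>t\<in>D. (\<lambda>i t. d * c i t) i t * Mp i t x)"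
    by (simp add: f tsmult_def sum_distrib_left fun_eq_iff mult.assoc)
  then show ?case by (rule ps_I[rotated]) (simp add: D)
qed

lemma ps_eq: "poly_span C_list = lspan Mgen"
  using ps_sub sub_ps by blast

lemma sum9: "(\<Sum>i<(9::nat). f i) = f 0 + f 1 + f 2 + f 3 + f 4 + f 5 + f 6 + f 7 + (f 8 :: F)"
proof -
  have "{..<(9::nat)} = {0,1,2,3,4,5,6,7,8}" using less9 by auto
  then show ?thesis by (simp add: algebra_simps)
qed

lemma lin_indep_C: "lin_indep C_list"
  unfolding lin_indep_def len_C
proof (intro allI impI)
  fix c :: "nat \<Rightarrow> F" and i :: nat
  assume H: "(\<lambda>x. \<Sum>i<9. c i * (C_list ! i) x) = (\<lambda>x. 0)" and i: "i < 9"
  have e: "c 0 * (C_list ! 0) x + c 1 * (C_list ! 1) x + c 2 * (C_list ! 2) x + c 3 * (C_list ! 3) x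
     + c 4 * (C_list ! 4) x + c 5 * (C_list ! 5) x + c 6 * (C_list ! 6) x + c 7 * (C_list ! 7) x
     + c 8 * (C_list ! 8) x = 0" for x
    using fun_cong[OF H, of x] by (simp only: sum9)
  note e2 = e[unfolded C_nth]
  have "c 0 = 0" using e2[of "(0,0,0,0)"] by (simp add: bt_def tadd_def tsmult_def)
  moreover have "c 1 = 0" using e2[of "(0,0,0,1)"] by (simp add: bt_def tadd_def tsmult_def)
  moreover have "c 2 = 0" using e2[of "(0,0,0,2)"] by (simp add: bt_def tadd_def tsmult_def)
  moreover have "c 3 = 0" using e2[of "(0,1,0,2)"] by (simp add: bt_def tadd_def tsmult_def)
  moreover have "c 4 = 0" using e2[of "(0,2,0,2)"] by (simp add: bt_def tadd_def tsmult_def)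
  moreover have "c 5 = 0" using e2[of "(1,2,0,1)"] by (simp add: bt_def tadd_def tsmult_def)
  moreover have "c 6 = 0" using e2[of "(2,2,0,0)"] by (simp add: bt_def tadd_def tsmult_def)
  moreover have "c 7 = 0" using e2[of "(1,1,0,0)"] by (simp add: bt_def tadd_def tsmult_def)
  moreover have "c 8 = 0" using e2[of "(1,1,0,1)"] by (simp add: bt_def tadd_def tsmult_def)
  ultimately show "c i = 0" using less9[OF i] by auto
qed

theorem mainTheorem2:
  shows "lin_indep C_list
    \<and> N = poly_span C_list
    \<and> Ngen (bt 0 2 0 2) = Ngen (bt 0 0 0 0)
    \<and> (\<forall>a::int. \<forall>j::int. j \<in> {0, 2} \<longrightarrow> bt a j a j \<in> N)"
  using lin_indep_C N_eq_lspan ps_eq Ngen_swap diag_in_N by auto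

end
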